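(* Let $p\ge1$ and let $\bm A\in\mathbb{R}^{m\times d}$, $\bm B\in\mathbb{R}^{n\times d}$ be finite sequences of vectors with rows $\bm a_i$, $\bm b_j$. Then \[\Big\|\sum_{i=1}^m\bm a_i-\sum_{j=1}^n\bm b_j\Big\|_p\le d^p_{\mathrm{ERP}}(\bm A,\bm B).\]
   Context: The ERP distance is defined recursively: $d^p_{\mathrm{ERP}}(\bm A,\emptyset)=\sum_{i=1}^m\|\bm a_i\|_p$, $d^p_{\mathrm{ERP}}(\emptyset,\bm B)=\sum_{i=1}^n\|\bm b_i\|_p$, and otherwise $d^p_{\mathrm{ERP}}(\bm A,\bm B)=\min\{\|\bm a_1\|_p+d^p_{\mathrm{ERP}}(\bm A_{2:},\bm B),\ \|\bm b_1\|_p+d^p_{\mathrm{ERP}}(\bm A,\bm B_{2:}),\ \|\bm a_1-\bm b_1\|_p+d^p_{\mathrm{ERP}}(\bm A_{2:},\bm B_{2:})\}$, where $\emptyset$ is the empty sequence and $\bm A_{2:}$ removes the first row. *)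

theory Defs
  imports "HOL-Analysis.Analysis"
begin

definition pnorm :: "real \<Rightarrow> real ^ 'd \<Rightarrow> real" where
  "pnorm p x = (\<Sum>i\<in>UNIV. \<bar>x $ i\<bar> powr p) powr (1 / p)"

fun erp :: "real \<Rightarrow> (real ^ 'd) list \<Rightarrow> (real ^ 'd) list \<Rightarrow> real" where
  "erp p A [] = (\<Sum>a\<leftarrow>A. pnorm p a)"
| "erp p [] B = (\<Sum>b\<leftarrow>B. pnorm p b)"
| "erp p (a # A) (b # B) =
     min (pnorm p a + erp p A (b # B))
       (min (pnorm p b + erp p (a # A) B)
            (pnorm p (a - b) + erp p A B))"

end

theory Submission
  imports Defs
begin

lemma powr_conv:
  fixes u v t p :: real
  assumes p: "p \<ge> 1" and u: "u \<ge> 0" and v: "v \<ge> 0" and t: "0 \<le> t" "t \<le> 1"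
  shows "((1 - t) * u + t * v) powr p \<le> (1 - t) * u powr p + t * v powr p"
proof -
  have tp: "s powr p \<le> s" if "0 \<le> s" "s \<le> 1" for s :: real
  proof (cases "s = 0")
    case False
    then have "s powr p \<le> s powr 1" using that p
      by (intro powr_mono') auto
    then show ?thesis using that by simp
  qed (simp)
  show ?thesis
  proof (cases "u = 0")
    case True
    then have "((1 - t) * u + t * v) powr p = t powr p * v powr p"
      using t v by (simp add: powr_mult)
    also have "\<dots> \<le> t * v powr p" using tp[OF t] by (intro mult_right_mono) auto
    finally show ?thesis using True p by simp
  next
    case u0: False
    show ?thesis
    proof (cases "v = 0")
      case True
      then have "((1 - t) * u + t * v) powr p = (1 - t) powr p * u powr p"
        using t u by (simp add: powr_mult)
      also have "\<dots> \<le> (1 - t) * u powr p" using tp[of "1 - t"] t by (intro mult_right_mono) auto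
      finally show ?thesis using True p by simp
    next
      case False
      have "convex_on {0<..} (\<lambda>x. x powr p)" using powr_convex p by blast
      from convex_onD[OF this, of t u v] show ?thesis using u v u0 False t
        by simp
    qed
  qed
qed

definition S :: "real \<Rightarrow> real ^ 'd \<Rightarrow> real" where
  "S p x = (\<Sum>i\<in>UNIV. \<bar>x $ i\<bar> powr p)"

lemma S_nonneg: "S p x \<ge> 0" unfolding S_def by (intro sum_nonneg) auto

lemma pnorm_S: "pnorm p x = S p x powr (1/p)" unfolding pnorm_def S_def by simp

lemma pnorm_nonneg: "pnorm p x \<ge> 0" unfolding pnorm_def by simp

lemma pnorm_zero_iff:
  assumes "p \<ge> 1" shows "pnorm p x = 0 \<longleftrightarrow> x = 0"
proof
  assume "pnorm p x = 0"
  then have "S p x = 0" unfolding pnorm_S by simp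
  then have "\<forall>i\<in>UNIV. \<bar>x $ i\<bar> powr p = 0" unfolding S_def
    by (subst (asm) sum_nonneg_eq_0_iff) auto
  then show "x = 0" by (simp add: vec_eq_iff)
next
  assume "x = 0" then show "pnorm p x = 0" unfolding pnorm_def using assms by simp
qed

lemma pnorm_S_pow:
  assumes "p \<ge> 1" shows "pnorm p x powr p = S p x"
  unfolding pnorm_S using assms S_nonneg[of p x]
  by (simp add: powr_powr)

lemma pnorm_minus: "pnorm p (- x) = pnorm p x"
  unfolding pnorm_def by simp

lemma pnorm_triangle:
  assumes p: "p \<ge> 1"
  shows "pnorm p (x + y) \<le> pnorm p x + pnorm p y"
proof (cases "x = 0 \<or> y = 0")
  case True then show ?thesis using pnorm_zero_iff[OF p] pnorm_nonneg by auto
next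
  case False
  define a where "a = pnorm p x"
  define b where "b = pnorm p y"
  have a: "a > 0" using False pnorm_zero_iff[OF p, of x] pnorm_nonneg[of p x] unfolding a_def by auto
  have b: "b > 0" using False pnorm_zero_iff[OF p, of y] pnorm_nonneg[of p y] unfolding b_def by auto
  define t where "t = b / (a + b)"
  have t: "0 \<le> t" "t \<le> 1" using a b unfolding t_def by auto
  have t1: "1 - t = a / (a + b)" using a b unfolding t_def by (simp add: field_simps)
  have Sa: "S p x = a powr p" unfolding a_def using pnorm_S_pow[OF p] by metis
  have Sb: "S p y = b powr p" unfolding b_def using pnorm_S_pow[OF p] by metis
  have pt: "\<bar>(x + y) $ i\<bar> powr p \<le> (a + b) powr p *
      ((1 - t) * (\<bar>x $ i\<bar> powr p / a powr p) + t * (\<bar>y $ i\<bar> powr p / b powr p))" for i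
  proof -
    have eq: "\<bar>x $ i\<bar> + \<bar>y $ i\<bar> = (a + b) * ((1 - t) * (\<bar>x $ i\<bar> / a) + t * (\<bar>y $ i\<bar> / b))"
    proof -
      have e1: "(1 - t) * (\<bar>x $ i\<bar> / a) = \<bar>x $ i\<bar> / (a + b)" unfolding t1 using a b by simp
      have e2: "t * (\<bar>y $ i\<bar> / b) = \<bar>y $ i\<bar> / (a + b)" unfolding t_def using a b by simp
      have "a + b \<noteq> 0" using a b by simp
      then show ?thesis unfolding e1 e2 add_divide_distrib[symmetric] by simp
    qed
    have "\<bar>(x + y) $ i\<bar> powr p \<le> (\<bar>x $ i\<bar> + \<bar>y $ i\<bar>) powr p"
      using p by (intro powr_mono2) (auto simp: abs_triangle_ineq)
    also have "\<dots> = (a + b) powr p * ((1 - t) * (\<bar>x $ i\<bar> / a) + t * (\<bar>y $ i\<bar> / b)) powr p"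
      unfolding eq using a b t by (subst powr_mult) auto
    also have "\<dots> \<le> (a + b) powr p * ((1 - t) * (\<bar>x $ i\<bar> / a) powr p + t * (\<bar>y $ i\<bar> / b) powr p)"
      using a b t p by (intro mult_left_mono powr_conv) auto
    finally show ?thesis using a b by (simp add: powr_divide)
  qed
  have "S p (x + y) \<le> (\<Sum>i\<in>UNIV. (a + b) powr p *
      ((1 - t) * (\<bar>x $ i\<bar> powr p / a powr p) + t * (\<bar>y $ i\<bar> powr p / b powr p)))"
    unfolding S_def by (intro sum_mono pt)
  also have "\<dots> = (a + b) powr p * ((1 - t) * (S p x / a powr p) + t * (S p y / b powr p))"
    proof -
    have "(\<Sum>i\<in>UNIV. (1 - t) * (\<bar>x $ i\<bar> powr p / a powr p)) = (1 - t) * ((\<Sum>i\<in>UNIV. \<bar>x $ i\<bar> powr p) / a powr p)"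
      by (simp add: sum_distrib_left sum_divide_distrib)
    moreover have "(\<Sum>i\<in>UNIV. t * (\<bar>y $ i\<bar> powr p / b powr p)) = t * ((\<Sum>i\<in>UNIV. \<bar>y $ i\<bar> powr p) / b powr p)"
      by (simp add: sum_distrib_left sum_divide_distrib)
    ultimately show ?thesis by (simp add: S_def sum_distrib_left[symmetric] sum.distrib)
  qed
  also have "\<dots> = (a + b) powr p" using a b unfolding Sa Sb by simp
  finally have "S p (x + y) \<le> (a + b) powr p" .
  then have "S p (x + y) powr (1/p) \<le> ((a + b) powr p) powr (1/p)"
    using p S_nonneg by (intro powr_mono2) auto
  also have "\<dots> = a + b" using a b p by (simp add: powr_powr)
  finally show ?thesis unfolding pnorm_S a_def b_def .
qed

lemma pnorm_sum_list:
  assumes "p \<ge> 1" shows "pnorm p (sum_list A) \<le> (\<Sum>a\<leftarrow>A. pnorm p a)"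
proof (induction A)
  case Nil then show ?case using assms by (simp add: pnorm_def)
next
  case (Cons a A)
  then show ?case using pnorm_triangle[OF assms, of a "sum_list A"] by simp
qed

lemma aux:
  "p \<ge> 1 \<Longrightarrow> pnorm p (sum_list A - sum_list B) \<le> erp p A B"
proof (induction p A B rule: erp.induct)
  case (1 p A)
  then show ?case using pnorm_sum_list[of p A] by simp
next
  case (2 p v va)
  then show ?case using pnorm_sum_list[of p "v # va"] pnorm_minus[of p "sum_list (v # va)"]
    by simp
next
  case (3 p a A b B)
  have p: "p \<ge> 1" by fact
  have c1: "pnorm p (sum_list (a # A) - sum_list (b # B)) \<le> pnorm p a + erp p A (b # B)"
  proof -
    have "sum_list (a # A) - sum_list (b # B) = a + (sum_list A - sum_list (b # B))" by simp
    then show ?thesis unfolding \<open>sum_list (a # A) - sum_list (b # B) = a + (sum_list A - sum_list (b # B))\<close> using pnorm_triangle[OF p, of a "sum_list A - sum_list (b # B)"] 3(1)[OF p]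
      by simp
  qed
  have c2: "pnorm p (sum_list (a # A) - sum_list (b # B)) \<le> pnorm p b + erp p (a # A) B"
  proof -
    have "sum_list (a # A) - sum_list (b # B) = - b + (sum_list (a # A) - sum_list B)" by simp
    then show ?thesis unfolding \<open>sum_list (a # A) - sum_list (b # B) = - b + (sum_list (a # A) - sum_list B)\<close> using pnorm_triangle[OF p, of "- b" "sum_list (a # A) - sum_list B"] 3(2)[OF p]
      pnorm_minus[of p b] by simp
  qed
  have c3: "pnorm p (sum_list (a # A) - sum_list (b # B)) \<le> pnorm p (a - b) + erp p A B"
  proof -
    have "sum_list (a # A) - sum_list (b # B) = (a - b) + (sum_list A - sum_list B)" by simp
    then show ?thesis unfolding \<open>sum_list (a # A) - sum_list (b # B) = (a - b) + (sum_list A - sum_list B)\<close> using pnorm_triangle[OF p, of "a - b" "sum_list A - sum_list B"] 3(3)[OF p]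
      by simp
  qed
  show ?case using c1 c2 c3 by simp
qed

theorem lemma2:
  fixes p :: real and A B :: "(real ^ 'd) list"
  assumes "p \<ge> 1"
  shows "pnorm p (sum_list A - sum_list B) \<le> erp p A B"
  using aux[OF assms] .

end
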